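(* Let $I\subseteq R$ be a good ideal, let $a_1,\dots,a_n\in\mathbb N$ with $a=a_1+\dots+a_n$, and let $t\ge1$ be an integer. Then $$I^{a+t}:\langle\mu_1^{a_1}\cdots\mu_n^{a_n}\rangle=\sum_{\substack{t_1,\dots,t_n\ge0\\ t_1+\dots+t_n=t-1}}\mu_1^{t_1}\cdots\mu_n^{t_n}\, I_{t_1+a_1,\dots,t_n+a_n}.$$
   Context: Let $\mathbb K$ be a field, $R=\mathbb K[x_1,\dots,x_n]$, $\mathfrak m=\langle x_1,\dots,x_n\rangle$, $\mathbb N=\{0,1,2,\dots\}$. A monomial $x_1^{\alpha_1}\cdots x_n^{\alpha_n}$ is identified with the point $(\alpha_1,\dots,\alpha_n)\in\mathbb N^n$. For a monomial ideal $I$, $G(I)$ denotes its (unique) minimal monomial generating set. If $I$ is an $\mathfrak m$-primary monomial ideal, then for each $i$ there is a unique $d_i\ge1$ with $x_i^{d_i}\in G(I)$; write $\mu_i=x_i^{d_i}$. For $(a_1,\dots,a_n)\in\mathbb N^n$ the box associated to $I$ is $B_{a_1,\dots,a_n}=([a_1d_1,(a_1+1)d_1]\times\cdots\times[a_nd_n,(a_n+1)d_n])\cap\mathbb N^n$; a monomial belongs to a box if its exponent vector does. An $\mathfrak m$-primary monomial ideal $I$ is called good if for every integer $l\ge1$, every element of $G(I^l)$ belongs to some box $B_{a_1,\dots,a_n}$ with $a_1+\dots+a_n=l-1$. For a good ideal $I$ and $a=(a_1,\dots,a_n)\in\mathbb N^n$, with $l=a_1+\dots+a_n+1$, define $I_{a_1,\dots,a_n}=\left\langle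 \frac{m}{\mu_1^{a_1}\cdots\mu_n^{a_n}} : m\in B_{a_1,\dots,a_n}\cap G(I^l)\right\rangle$. *)

theory Defs
  imports Main
begin

text \<open>Monomials of K[x_i : i in 'n] are identified with exponent vectors 'n => nat
  (the index type 'n is finite, n = CARD('n)). A monomial ideal is identified with the
  set of monomials it contains, i.e. an upward closed subset of N^n.\<close>

type_synonym 'n monomial = "'n \<Rightarrow> nat"

definition mon_ideal :: "('n::finite) monomial set \<Rightarrow> bool" where
  "mon_ideal I \<longleftrightarrow> (\<forall>m\<in>I. \<forall>m'. m \<le> m' \<longrightarrow> m' \<in> I)"

definition mgen :: "('n::finite) monomial set \<Rightarrow> 'n monomial set" where
  "mgen S = {m. \<exists>s\<in>S. s \<le> m}"

definition mingens :: "('n::finite) monomial set \<Rightarrow> 'n monomial set" where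
  "mingens I = {m\<in>I. \<forall>m'\<in>I. m' \<le> m \<longrightarrow> m' = m}"

definition mprod :: "('n::finite) monomial set \<Rightarrow> 'n monomial set \<Rightarrow> 'n monomial set" where
  "mprod I J = mgen {(\<lambda>i. a i + b i) | a b. a \<in> I \<and> b \<in> J}"

fun mpow :: "('n::finite) monomial set \<Rightarrow> nat \<Rightarrow> 'n monomial set" where
  "mpow I 0 = UNIV"
| "mpow I (Suc l) = mprod I (mpow I l)"

definition mcolon :: "('n::finite) monomial set \<Rightarrow> 'n monomial \<Rightarrow> 'n monomial set" where
  "mcolon I u = {m. (\<lambda>i. m i + u i) \<in> I}"

definition mshift :: "('n::finite) monomial \<Rightarrow> 'n monomial set \<Rightarrow> 'n monomial set" where
  "mshift u J = mgen {(\<lambda>i. u i + m i) | m. m \<in> J}"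

definition xpow :: "('n::finite) \<Rightarrow> nat \<Rightarrow> 'n monomial" where
  "xpow i d = (\<lambda>j. if j = i then d else 0)"

text \<open>m-primary monomial ideal: proper (contained in m, i.e. 1 not in I) and containing
  a pure power of every variable.\<close>
definition m_primary :: "('n::finite) monomial set \<Rightarrow> bool" where
  "m_primary I \<longleftrightarrow> mon_ideal I \<and> (\<lambda>_. 0) \<notin> I \<and> (\<forall>i. \<exists>d. xpow i d \<in> I)"

definition dexp :: "('n::finite) monomial set \<Rightarrow> 'n \<Rightarrow> nat" where
  "dexp I i = (LEAST d. xpow i d \<in> I)"

definition mupow :: "('n::finite) monomial set \<Rightarrow> 'n monomial \<Rightarrow> 'n monomial" where
  "mupow I a = (\<lambda>i. a i * dexp I i)"

definition box :: "('n::finite) monomial set \<Rightarrow> 'n monomial \<Rightarrow> 'n monomial set" where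
  "box I a = {m. \<forall>i. a i * dexp I i \<le> m i \<and> m i \<le> (a i + 1) * dexp I i}"

definition good :: "('n::finite) monomial set \<Rightarrow> bool" where
  "good I \<longleftrightarrow> m_primary I \<and>
     (\<forall>l\<ge>1. \<forall>m\<in>mingens (mpow I l). \<exists>a. sum a UNIV = l - 1 \<and> m \<in> box I a)"

definition Isub :: "('n::finite) monomial set \<Rightarrow> 'n monomial \<Rightarrow> 'n monomial set" where
  "Isub I a = mgen {(\<lambda>i. m i - mupow I a i) | m.
                     m \<in> box I a \<inter> mingens (mpow I (sum a UNIV + 1))}"

end

theory Submission
  imports Defs
begin

lemma mgen_up: "s \<in> S \<Longrightarrow> s \<le> m \<Longrightarrow> m \<in> mgen S"
  by (auto simp: mgen_def)

lemma mpow_up: "v \<in> mpow I p \<Longrightarrow> v \<le> w \<Longrightarrow> w \<in> mpow I p"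
  by (cases p) (auto simp: mprod_def mgen_def intro: order_trans)

lemma mprod_in: "g \<in> I \<Longrightarrow> u \<in> J \<Longrightarrow> (\<lambda>i. g i + u i) \<in> mprod I J"
  unfolding mprod_def by (rule mgen_up[OF _ order_refl]) blast

lemma mpow_add:
  fixes I :: "('n::finite) monomial set"
  shows "v \<in> mpow I p \<Longrightarrow> w \<in> mpow I q \<Longrightarrow> (\<lambda>i. v i + w i) \<in> mpow I (p + q)"
proof (induction p arbitrary: v)
  case 0
  then show ?case using mpow_up[of w I q] by (auto simp: le_fun_def)
next
  case (Suc p)
  from Suc.prems(1) obtain g u where g: "g \<in> I" "u \<in> mpow I p" "(\<lambda>i. g i + u i) \<le> v"
    by (auto simp: mprod_def mgen_def)
  have uw: "(\<lambda>i. u i + w i) \<in> mpow I (p+q)" using Suc.IH g(2) Suc.prems(2) by blast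
  have "(\<lambda>i. g i + (u i + w i)) \<in> mpow I (Suc (p+q))"
    unfolding mpow.simps by (rule mprod_in[OF g(1) uw])
  moreover have "(\<lambda>i. g i + (u i + w i)) \<le> (\<lambda>i. v i + w i)" using g(3) by (auto simp: le_fun_def)
  ultimately show ?case using mpow_up by fastforce
qed

lemma mpow_smult:
  fixes I :: "('n::finite) monomial set"
  shows "v \<in> mpow I L \<Longrightarrow> (\<lambda>i. K * v i) \<in> mpow I (K * L)"
proof (induction K)
  case 0
  then show ?case by simp
next
  case (Suc K)
  then show ?case using mpow_add[of v I L "\<lambda>i. K * v i" "K * L"] by simp
qed

lemma exists_mingen:
  fixes S :: "('n::finite) monomial set"
  assumes "v \<in> S" shows "\<exists>m\<in>mingens S. m \<le> v"
proof -
  obtain m where m: "m \<in> S \<and> m \<le> v" and mn: "\<And>y. y \<in> S \<and> y \<le> v \<Longrightarrow> sum m UNIV \<le> sum y UNIV"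
    using ex_has_least_nat[of "\<lambda>m. m \<in> S \<and> m \<le> v" v "\<lambda>m. sum m UNIV"] assms by auto
  have "m \<in> mingens S"
    unfolding mingens_def
  proof (intro CollectI conjI ballI impI)
    show "m \<in> S" using m by blast
    fix m' assume m': "m' \<in> S" "m' \<le> m"
    show "m' = m"
    proof (rule ccontr)
      assume "m' \<noteq> m"
      then obtain k where "m' k \<noteq> m k" by auto
      then have "m' k < m k" using m'(2) by (simp add: le_fun_def le_neq_implies_less)
      then have "sum m' UNIV < sum m UNIV"
        using m'(2) by (intro sum_strict_mono_ex1) (auto simp: le_fun_def)
      moreover have "sum m UNIV \<le> sum m' UNIV" using mn[of m'] m' m order_trans by blast
      ultimately show False by simp
    qed
  qed
  then show ?thesis using m by blast
qed

lemma good_box: "good I \<Longrightarrow> l \<ge> 1 \<Longrightarrow> m \<in> mingens (mpow I l) \<Longrightarrow> \<exists>a. sum a UNIV = l - 1 \<and> m \<in> box I a"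
  by (auto simp: good_def)

lemma mingens_in: "m \<in> mingens S \<Longrightarrow> m \<in> S" by (simp add: mingens_def)

lemma xpow_in: "good I \<Longrightarrow> xpow i (dexp I i) \<in> I"
  unfolding dexp_def good_def m_primary_def by (meson LeastI_ex)

lemma dexp_pos: "good I \<Longrightarrow> dexp I i > 0"
proof (rule ccontr)
  assume g: "good I" and "\<not> 0 < dexp I i"
  then have "dexp I i = 0" by simp
  then have "xpow i 0 \<in> I" using xpow_in[OF g, of i] by simp
  moreover have "xpow i 0 = (\<lambda>_. 0)" by (auto simp: xpow_def)
  ultimately show False using g by (simp add: good_def m_primary_def)
qed

lemma sum_delta: "sum (\<lambda>j. c j + (if j = i then k else 0)) (UNIV::'n::finite set) = sum c UNIV + (k::nat)"
  by (simp add: sum.distrib)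

lemma mupow_in:
  fixes I :: "('n::finite) monomial set"
  assumes g: "good I" shows "mupow I c \<in> mpow I (sum c UNIV)"
proof -
  have "\<forall>c::'n monomial. sum c UNIV = n \<longrightarrow> mupow I c \<in> mpow I n" for n
  proof (induction n)
    case 0 then show ?case by simp
  next
    case (Suc n)
    show ?case
    proof (intro allI impI)
      fix c :: "'n monomial" assume s: "sum c UNIV = Suc n"
      have "\<exists>i. c i \<noteq> 0"
      proof (rule ccontr)
        assume "\<not> (\<exists>i. c i \<noteq> 0)"
        then have "c = (\<lambda>_. 0)" by auto
        then show False using s by simp
      qed
      then obtain i q where ci: "c i = Suc q" by (meson not0_implies_Suc)
      define c' where "c' = (\<lambda>j. if j = i then q else c j)"
      have cc: "c = (\<lambda>j. c' j + (if j = i then 1 else 0))" using ci by (auto simp: c'_def)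
      have "sum c UNIV = sum c' UNIV + 1" by (subst cc) (rule sum_delta)
      then have IH: "mupow I c' \<in> mpow I n" using Suc.IH s by simp
      have eq: "mupow I c = (\<lambda>k. xpow i (dexp I i) k + mupow I c' k)"
        using ci by (auto simp: mupow_def xpow_def c'_def)
      show "mupow I c \<in> mpow I (Suc n)"
        unfolding eq mpow.simps by (rule mprod_in[OF xpow_in[OF g] IH])
    qed
  qed
  thus ?thesis by blast
qed


lemma rigid:
  fixes I :: "('n::finite) monomial set"
  assumes g: "good I" and v: "v \<in> mpow I L" and le: "v \<le> mupow I b" and sb: "sum b UNIV = L"
  shows "mupow I b \<le> v"
proof (rule ccontr)
  assume "\<not> mupow I b \<le> v"
  then obtain i where vi: "v i < b i * dexp I i" by (auto simp: le_fun_def mupow_def not_le)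
  define d where "d = dexp I"
  have dpos: "\<And>k. d k > 0" using dexp_pos[OF g] by (simp add: d_def)
  define K where "K = 2 * d i"
  have K2: "K \<ge> 2" using dpos[of i] by (simp add: K_def)
  have "b i \<noteq> 0" using vi by (cases "b i") auto
  then have "L \<ge> 1" using sb
    by (metis One_nat_def Suc_leI finite_UNIV gr0I sum_eq_0_iff UNIV_I)
  then have KL: "K * L \<ge> 1" using K2 by simp
  have Kv: "(\<lambda>k. K * v k) \<in> mpow I (K*L)" using mpow_smult[OF v] .
  obtain m where m: "m \<in> mingens (mpow I (K*L))" "m \<le> (\<lambda>k. K * v k)"
    using exists_mingen[OF Kv] by blast
  obtain c where c: "sum c UNIV = K*L - 1" "m \<in> box I c"
    using good_box[OF g KL m(1)] by blast
  have cm: "c k * d k \<le> K * v k" for k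
    using c(2) m(2) by (auto simp: box_def d_def le_fun_def intro: order_trans)
  have vb: "v k \<le> b k * d k" for k using le by (auto simp: le_fun_def mupow_def d_def)
  have ck: "c k \<le> K * b k" for k
  proof -
    have "c k * d k \<le> K * (b k * d k)" using cm[of k] vb[of k]
      by (meson mult_le_mono2 order_trans)
    then have "c k * d k \<le> (K * b k) * d k" by (simp add: mult.assoc)
    then show ?thesis using dpos[of k] by simp
  qed
  have ci: "c i + 2 \<le> K * b i"
  proof -
    have "v i + 1 \<le> b i * d i" using vi by (simp add: d_def)
    then have "K * (v i + 1) \<le> K * (b i * d i)" by (rule mult_le_mono2)
    moreover have "c i * d i + 2 * d i \<le> K * v i + K" using cm[of i] by (simp add: K_def)
    ultimately have "c i * d i + 2 * d i \<le> (K * b i) * d i"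
      by (simp add: algebra_simps)
    then have "(c i + 2) * d i \<le> (K * b i) * d i" by (simp add: algebra_simps)
    then show ?thesis using dpos[of i] mult_le_cancel2 by blast
  qed
  define c3 where "c3 = (\<lambda>k. c k + (if k = i then 2 else 0))"
  have "sum c3 UNIV \<le> sum (\<lambda>k. K * b k) UNIV"
    by (rule sum_mono) (use ck ci in \<open>auto simp: c3_def\<close>)
  moreover have "sum c3 UNIV = K*L - 1 + 2" unfolding c3_def sum_delta c(1) ..
  moreover have "sum (\<lambda>k. K * b k) UNIV = K * L" by (simp add: sum_distrib_left[symmetric] sb)
  ultimately show False using KL by linarith
qed

lemma between:
  fixes a f :: "'n::finite \<Rightarrow> nat"
  assumes af: "a \<le> f" and s1: "sum a UNIV \<le> s" and s2: "s \<le> sum f UNIV"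
  shows "\<exists>c. a \<le> c \<and> c \<le> f \<and> sum c UNIV = s"
proof -
  have "\<forall>k. sum a UNIV + k \<le> sum f UNIV \<longrightarrow> (\<exists>c. a \<le> c \<and> c \<le> f \<and> sum c UNIV = sum a UNIV + k)"
  proof (intro allI)
    fix k show "sum a UNIV + k \<le> sum f UNIV \<longrightarrow> (\<exists>c. a \<le> c \<and> c \<le> f \<and> sum c UNIV = sum a UNIV + k)"
    proof (induction k)
      case 0 then show ?case using af by auto
    next
      case (Suc k)
      show ?case
      proof
        assume h: "sum a UNIV + Suc k \<le> sum f UNIV"
        then obtain c where c: "a \<le> c" "c \<le> f" "sum c UNIV = sum a UNIV + k" using Suc.IH by auto
        have "\<exists>i. c i < f i"
        proof (rule ccontr)
          assume "\<not> (\<exists>i. c i < f i)"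
          then have "f \<le> c" by (auto simp: le_fun_def not_less)
          then have "sum f UNIV \<le> sum c UNIV" by (intro sum_mono) (auto simp: le_fun_def)
          then show False using h c(3) by simp
        qed
        then obtain i where i: "c i < f i" by blast
        define c' where "c' = (\<lambda>j. c j + (if j = i then 1 else 0))"
        have "a \<le> c'" using c(1) by (auto simp: le_fun_def c'_def intro: le_SucI)
        moreover have "c' \<le> f" using c(2) i by (auto simp: le_fun_def c'_def)
        moreover have "sum c' UNIV = sum a UNIV + Suc k" unfolding c'_def sum_delta c(3) by simp
        ultimately show "\<exists>c. a \<le> c \<and> c \<le> f \<and> sum c UNIV = sum a UNIV + Suc k" by blast
      qed
    qed
  qed
  from this[rule_format, of "s - sum a UNIV"] show ?thesis using s1 s2 by simp
qed


lemma claimE: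
  fixes I :: "('n::finite) monomial set"
  assumes g: "good I" and y: "y \<in> mpow I l" and l: "l = Suc (sum c UNIV)" and muc: "mupow I c \<le> y"
  shows "\<exists>m \<in> box I c \<inter> mingens (mpow I l). m \<le> y"
proof (cases "\<exists>j. (c j + 1) * dexp I j \<le> y j")
  case True
  then obtain j where j: "(c j + 1) * dexp I j \<le> y j" by blast
  define c1 where "c1 = (\<lambda>k. c k + (if k = j then 1 else 0))"
  have s1: "sum c1 UNIV = l" unfolding c1_def sum_delta l by simp
  have E: "mupow I c1 \<in> mpow I l" using mupow_in[OF g, of c1] s1 by simp
  have Ey: "mupow I c1 \<le> y"
    using muc j by (auto simp: le_fun_def mupow_def c1_def)
  obtain m where m: "m \<in> mingens (mpow I l)" "m \<le> mupow I c1"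
    using exists_mingen[OF E] by blast
  have "mupow I c1 \<le> m" using rigid[OF g mingens_in[OF m(1)] m(2) s1] .
  then have meq: "m = mupow I c1" using m(2) by simp
  have "m \<in> box I c" unfolding meq box_def mupow_def c1_def by auto
  then show ?thesis using m(1) meq Ey by blast
next
  case False
  then have yl: "y k < (c k + 1) * dexp I k" for k by (simp add: not_le)
  obtain m where m: "m \<in> mingens (mpow I l)" "m \<le> y"
    using exists_mingen[OF y] by blast
  obtain c' where c': "sum c' UNIV = l - 1" "m \<in> box I c'"
    using good_box[OF g _ m(1)] l by auto
  have le: "c' k \<le> c k" for k
  proof -
    have "c' k * dexp I k \<le> m k" using c'(2) by (simp add: box_def)
    also have "\<dots> \<le> y k" using m(2) by (simp add: le_fun_def)
    also have "\<dots> < (c k + 1) * dexp I k" by (rule yl)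
    finally have "c' k < c k + 1" using mult_less_cancel2 by blast
    then show ?thesis by simp
  qed
  have "c' = c"
  proof (rule ccontr)
    assume "c' \<noteq> c"
    then obtain k where "c' k \<noteq> c k" by auto
    then have "c' k < c k" using le[of k] by simp
    then have "sum c' UNIV < sum c UNIV" using le by (intro sum_strict_mono_ex1) auto
    then show False using c'(1) l by simp
  qed
  then show ?thesis using m c' by blast
qed

theorem mainTheorem16:
  fixes I :: "('n::finite) monomial set" and a :: "'n monomial" and t :: nat
  assumes "good I" and "t \<ge> 1"
  shows "mcolon (mpow I (sum a UNIV + t)) (mupow I a) =
           (\<Union>tv\<in>{tv :: 'n monomial. sum tv UNIV = t - 1}.
              mshift (mupow I tv) (Isub I (\<lambda>i. tv i + a i)))"
proof
  note g = assms(1)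
  define l where "l = sum a UNIV + t"
  define d where "d = dexp I"
  show "mcolon (mpow I (sum a UNIV + t)) (mupow I a) \<subseteq> (\<Union>tv\<in>{tv :: 'n monomial. sum tv UNIV = t - 1}.
              mshift (mupow I tv) (Isub I (\<lambda>i. tv i + a i)))"
  proof
    fix x assume "x \<in> mcolon (mpow I (sum a UNIV + t)) (mupow I a)"
    then have y: "(\<lambda>i. x i + mupow I a i) \<in> mpow I l" by (simp add: mcolon_def l_def)
    define y where "y = (\<lambda>i. x i + mupow I a i)"
    obtain m0 where m0: "m0 \<in> mingens (mpow I l)" "m0 \<le> y"
      using exists_mingen[OF y] unfolding y_def by blast
    obtain b where b: "sum b UNIV = l - 1" "m0 \<in> box I b"
      using good_box[OF g _ m0(1)] assms(2) by (auto simp: l_def)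
    define f where "f = (\<lambda>i. max (a i) (b i))"
    have af: "a \<le> f" by (auto simp: f_def le_fun_def)
    have "sum b UNIV \<le> sum f UNIV" by (intro sum_mono) (auto simp: f_def)
    moreover have "sum a UNIV \<le> l - 1" using assms(2) by (simp add: l_def)
    ultimately obtain c where c: "a \<le> c" "c \<le> f" "sum c UNIV = l - 1"
      using between[OF af, of "l - 1"] b(1) by auto
    have muc: "mupow I c \<le> y"
    proof (unfold le_fun_def, rule allI)
      fix i
      have "c i \<le> max (a i) (b i)" using c(2) by (auto simp: le_fun_def f_def)
      then have "c i \<le> a i \<or> c i \<le> b i" by linarith
      then show "mupow I c i \<le> y i"
      proof
        assume "c i \<le> a i"
        then have "c i * dexp I i \<le> a i * dexp I i" by (rule mult_le_mono1)
        then show ?thesis unfolding mupow_def y_def by linarith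
      next
        assume "c i \<le> b i"
        then have "mupow I c i \<le> b i * dexp I i" by (simp add: mupow_def)
        also have "\<dots> \<le> m0 i" using b(2) by (simp add: box_def)
        also have "\<dots> \<le> y i" using m0(2) by (simp add: le_fun_def)
        finally show ?thesis .
      qed
    qed
    have lc: "l = Suc (sum c UNIV)" using c(3) assms(2) by (simp add: l_def)
    obtain m where m: "m \<in> box I c" "m \<in> mingens (mpow I l)" "m \<le> y"
      using claimE[OF g y[folded y_def] lc muc] by blast
    define tv where "tv = (\<lambda>i. c i - a i)"
    have stv: "sum tv UNIV = t - 1"
      unfolding tv_def using c(1) c(3)
      by (subst sum_subtractf_nat) (auto simp: le_fun_def l_def)
    have tva: "(\<lambda>i. tv i + a i) = c" using c(1) by (auto simp: tv_def le_fun_def)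
    define u where "u = (\<lambda>i. m i - mupow I c i)"
    have u: "u \<in> Isub I c" unfolding Isub_def u_def
      by (rule mgen_up[OF _ order_refl]) (use m lc in auto)
    have ux: "(\<lambda>i. mupow I tv i + u i) \<le> x"
    proof (unfold le_fun_def, rule allI)
      fix i
      have h1: "c i * d i \<le> m i" using m(1) by (simp add: box_def d_def)
      have h2: "a i * d i \<le> c i * d i" using c(1) by (simp add: le_fun_def)
      have h3: "m i \<le> x i + a i * d i" using m(3) by (simp add: le_fun_def y_def mupow_def d_def)
      have h4: "(c i - a i) * d i = c i * d i - a i * d i" by (simp add: diff_mult_distrib)
      show "mupow I tv i + u i \<le> x i"
        using h1 h2 h3 h4 by (simp add: u_def tv_def mupow_def d_def)
    qed
    have "x \<in> mshift (mupow I tv) (Isub I (\<lambda>i. tv i + a i))"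
      unfolding tva mshift_def by (rule mgen_up[OF _ ux]) (use u in blast)
    then show "x \<in> (\<Union>tv\<in>{tv :: 'n monomial. sum tv UNIV = t - 1}.
              mshift (mupow I tv) (Isub I (\<lambda>i. tv i + a i)))" using stv by blast
  qed
next
  note g = assms(1)
  show "(\<Union>tv\<in>{tv :: 'n monomial. sum tv UNIV = t - 1}.
              mshift (mupow I tv) (Isub I (\<lambda>i. tv i + a i))) \<subseteq> mcolon (mpow I (sum a UNIV + t)) (mupow I a)"
  proof
    fix x assume "x \<in> (\<Union>tv\<in>{tv :: 'n monomial. sum tv UNIV = t - 1}.
              mshift (mupow I tv) (Isub I (\<lambda>i. tv i + a i)))"
    then obtain tv where stv: "sum tv UNIV = t - 1" and
      xs: "x \<in> mshift (mupow I tv) (Isub I (\<lambda>i. tv i + a i))" by blast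
    define c where "c = (\<lambda>i. tv i + a i)"
    have sc: "sum c UNIV + 1 = sum a UNIV + t" using stv assms(2) by (simp add: c_def sum.distrib)
    from xs obtain u where u: "u \<in> Isub I c" "(\<lambda>i. mupow I tv i + u i) \<le> x"
      unfolding mshift_def mgen_def c_def by blast
    from u(1) obtain m where m: "m \<in> box I c" "m \<in> mingens (mpow I (sum c UNIV + 1))"
      "(\<lambda>i. m i - mupow I c i) \<le> u"
      unfolding Isub_def mgen_def by blast
    have mx: "m \<le> (\<lambda>i. x i + mupow I a i)"
    proof (unfold le_fun_def, rule allI)
      fix i
      have h1: "c i * dexp I i \<le> m i" using m(1) by (simp add: box_def)
      have h2: "m i - c i * dexp I i \<le> u i" using m(3) by (simp add: le_fun_def mupow_def)
      have h3: "tv i * dexp I i + u i \<le> x i" using u(2) by (simp add: le_fun_def mupow_def)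
      have h4: "c i * dexp I i = tv i * dexp I i + a i * dexp I i" by (simp add: c_def add_mult_distrib)
      show "m i \<le> x i + mupow I a i" using h1 h2 h3 h4 by (simp add: mupow_def)
    qed
    have "(\<lambda>i. x i + mupow I a i) \<in> mpow I (sum a UNIV + t)"
      using mpow_up[OF mingens_in[OF m(2)] mx] sc by metis
    then show "x \<in> mcolon (mpow I (sum a UNIV + t)) (mupow I a)" by (simp add: mcolon_def)
  qed
qed

end
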